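(* Let $n\in\mathbb{N}$, $\mathcal{R}\subset\mathcal{H}_n$, and let $\mathbb{T}$ be a generator set of $\mathcal{R}$. Then for all $A_1,A_2\subset[n]$, $$\{\mathcal{O}_{A_1},\mathcal{O}_{A_1^c}\}=\{\mathcal{O}_{A_2},\mathcal{O}_{A_2^c}\}\iff A_1\sim_{\mathcal{R}}A_2 .$$
   Context: $[n]=\{1,\dots,n\}$, $A^c=[n]\setminus A$. $\mathcal{H}_n$ is the computational basis $\{|i_1\dots i_n\rangle: i_j\in\{0,1\}\}$. For $|\psi\rangle=|a_1\dots a_n\rangle$ and non-empty $A=\{i_1<\dots<i_m\}\subset[n]$, $|\psi_A\rangle=|a_{i_1}\dots a_{i_m}\rangle$. For non-empty $A$, $\sim_A$ on $\mathcal{R}$ is: $|\psi\rangle\sim_A|\phi\rangle$ iff $|\psi_A\rangle=|\phi_A\rangle$; $\sim_\emptyset$ makes all elements equivalent; $\mathcal{R}/{\sim_A}$ is the set of classes. $A_1\sim_{\mathcal{R}}A_2$ iff $\{\mathcal{R}/{\sim_{A_1}},\mathcal{R}/{\sim_{A_1^c}}\}=\{\mathcal{R}/{\sim_{A_2}},\mathcal{R}/{\sim_{A_2^c}}\}$. For a set $F$ of maps $\mathcal{R}\to\mathcal{R}$, $\mathcal{G}(F)$ denotes the closure of $F$ under composition. A set $\mathbb{T}$ of maps $\mathcal{R}\to\mathcal{R}$ is a generator set of $\mathcal{R}$ if: (i) all $P,T\in\mathcal{G}(\mathbb{T})$ commute, $PT=TP$; (ii) for all $|\psi\rangle,|\phi\rangle\in\mathcal{R}$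 there is $P\in\mathcal{G}(\mathbb{T})$ with $P|\psi\rangle=|\phi\rangle$; (iii) (local invariance) for every $P\in\mathbb{T}$ and non-empty $A\subset[n]$, if $(P|\psi\rangle)_A=|\psi_A\rangle$ for some $|\psi\rangle\in\mathcal{R}$, then $(P|\phi\rangle)_A=|\phi_A\rangle$ for all $|\phi\rangle\in\mathcal{R}$. For non-empty $A\subset[n]$, $\mathcal{O}_A=\{P\in\mathcal{G}(\mathbb{T}) : \forall|\psi\rangle\in\mathcal{R},\ (P|\psi\rangle)_A=|\psi_A\rangle\}$, and $\mathcal{O}_\emptyset=\mathcal{G}(\mathbb{T})$. Operators are compared as maps on $\mathcal{R}$. *)

theory Defs
  imports Main "HOL-Library.FuncSet"
begin

text \<open>Computational basis states of n qubits: bool lists of length n;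
  position i (1-based) is the list entry at index i-1.\<close>

definition basis :: "nat \<Rightarrow> bool list set" where
  "basis n = {xs. length xs = n}"

definition qset :: "nat \<Rightarrow> nat set" where
  "qset n = {1..n}"

definition compl_q :: "nat \<Rightarrow> nat set \<Rightarrow> nat set" where
  "compl_q n A = qset n - A"

definition proj :: "nat set \<Rightarrow> bool list \<Rightarrow> bool list" where
  "proj A psi = map (\<lambda>i. psi ! (i - 1)) (sorted_list_of_set A)"

definition simA :: "bool list set \<Rightarrow> nat set \<Rightarrow> (bool list \<times> bool list) set" where
  "simA R A = {(x, y). x \<in> R \<and> y \<in> R \<and> (A = {} \<or> proj A x = proj A y)}"

definition classes :: "bool list set \<Rightarrow> nat set \<Rightarrow> bool list set set" where
  "classes R A = R // simA R A"

definition sim_R :: "nat \<Rightarrow> bool list set \<Rightarrow> nat set \<Rightarrow> nat set \<Rightarrow> bool" where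
  "sim_R n R A1 A2 \<longleftrightarrow>
     {classes R A1, classes R (compl_q n A1)} = {classes R A2, classes R (compl_q n A2)}"

inductive_set gen :: "('a \<Rightarrow> 'a) set \<Rightarrow> ('a \<Rightarrow> 'a) set" for F where
  base: "P \<in> F \<Longrightarrow> P \<in> gen F"
| comp: "P \<in> gen F \<Longrightarrow> Q \<in> gen F \<Longrightarrow> P \<circ> Q \<in> gen F"

definition generator_set ::
  "nat \<Rightarrow> bool list set \<Rightarrow> (bool list \<Rightarrow> bool list) set \<Rightarrow> bool" where
  "generator_set n R T \<longleftrightarrow>
     (\<forall>P\<in>T. \<forall>x\<in>R. P x \<in> R) \<and>
     (\<forall>P\<in>gen T. \<forall>Q\<in>gen T. \<forall>x\<in>R. P (Q x) = Q (P x)) \<and>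
     (\<forall>psi\<in>R. \<forall>phi\<in>R. \<exists>P\<in>gen T. P psi = phi) \<and>
     (\<forall>P\<in>T. \<forall>A. A \<noteq> {} \<longrightarrow> A \<subseteq> qset n \<longrightarrow>
        (\<exists>psi\<in>R. proj A (P psi) = proj A psi) \<longrightarrow>
        (\<forall>phi\<in>R. proj A (P phi) = proj A phi))"

text \<open>O_A, with operators identified as maps on R (restricted to R).\<close>
definition Ocal ::
  "bool list set \<Rightarrow> (bool list \<Rightarrow> bool list) set \<Rightarrow> nat set \<Rightarrow> (bool list \<Rightarrow> bool list) set" where
  "Ocal R T A =
     (if A = {} then (\<lambda>P. restrict P R) ` gen T
      else (\<lambda>P. restrict P R) ` {P \<in> gen T. \<forall>psi\<in>R. proj A (P psi) = proj A psi})"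

end

theory Submission
  imports Defs
begin

definition agree :: "nat set \<Rightarrow> bool list \<Rightarrow> bool list \<Rightarrow> bool" where
  "agree A x y \<longleftrightarrow> (\<forall>i\<in>A. x ! (i - 1) = y ! (i - 1))"

lemma proj_eq_agree: "finite A \<Longrightarrow> (proj A x = proj A y) \<longleftrightarrow> agree A x y"
  unfolding proj_def agree_def by (simp add: map_eq_conv)

lemma gs1: "generator_set n R T \<Longrightarrow> \<forall>P\<in>T. \<forall>x\<in>R. P x \<in> R"
  unfolding generator_set_def by (rule conjunct1)
lemma gs3: "generator_set n R T \<Longrightarrow> \<forall>psi\<in>R. \<forall>phi\<in>R. \<exists>P\<in>gen T. P psi = phi"
  unfolding generator_set_def by (drule conjunct2, drule conjunct2, rule conjunct1)
lemma gs4: "generator_set n R T \<Longrightarrow> (\<forall>P\<in>T. \<forall>A. A \<noteq> {} \<longrightarrow> A \<subseteq> qset n \<longrightarrow>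
        (\<exists>psi\<in>R. proj A (P psi) = proj A psi) \<longrightarrow>
        (\<forall>phi\<in>R. proj A (P phi) = proj A phi))"
  unfolding generator_set_def by (drule conjunct2, drule conjunct2, rule conjunct2)

lemma gen_closed:
  assumes "generator_set n R T" "P \<in> gen T" "x \<in> R" shows "P x \<in> R"
  using assms(2,3)
proof (induction arbitrary: x rule: gen.induct)
  case (base P) then show ?case using gs1[OF assms(1)] by blast
next
  case (comp P Q) then show ?case by simp
qed

lemma gen_bits:
  assumes g: "generator_set n R T" and "P \<in> gen T" and i: "i \<in> qset n"
  shows "(\<forall>x\<in>R. P x ! (i - 1) = x ! (i - 1)) \<or> (\<forall>x\<in>R. P x ! (i - 1) = (\<not> x ! (i - 1)))"
  using assms(2)
proof (induction rule: gen.induct)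
  case (base P)
  have li: "(\<exists>psi\<in>R. proj {i} (P psi) = proj {i} psi) \<longrightarrow>
        (\<forall>phi\<in>R. proj {i} (P phi) = proj {i} phi)"
  proof -
    have h: "{i} \<noteq> {} \<longrightarrow> {i} \<subseteq> qset n \<longrightarrow> ((\<exists>psi\<in>R. proj {i} (P psi) = proj {i} psi) \<longrightarrow>
        (\<forall>phi\<in>R. proj {i} (P phi) = proj {i} phi))"
      using bspec[OF gs4[OF g] base] by (rule spec)
    have "{i} \<subseteq> qset n" using i by simp
    then show ?thesis using h by blast
  qed
  have pj: "\<And>x. proj {i} (P x) = proj {i} x \<longleftrightarrow> P x ! (i - 1) = x ! (i - 1)"
    by (simp add: proj_def)
  show ?case
  proof (cases "\<exists>psi\<in>R. P psi ! (i - 1) = psi ! (i - 1)")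
    case True
    then have "\<forall>phi\<in>R. proj {i} (P phi) = proj {i} phi" using li pj by blast
    then show ?thesis using pj by blast
  next
    case False
    then have "\<forall>x\<in>R. P x ! (i - 1) = (\<not> x ! (i - 1))" by blast
    then show ?thesis by blast
  qed
next
  case (comp P Q)
  have cl: "\<And>x. x \<in> R \<Longrightarrow> Q x \<in> R" using gen_closed[OF g comp(2)] by blast
  from comp(3) show ?case
  proof
    assume p: "\<forall>x\<in>R. P x ! (i - 1) = x ! (i - 1)"
    from comp(4) show ?case
    proof
      assume q: "\<forall>x\<in>R. Q x ! (i - 1) = x ! (i - 1)"
      have "\<forall>x\<in>R. (P \<circ> Q) x ! (i - 1) = x ! (i - 1)"
      proof
        fix x assume x: "x \<in> R"
        show "(P \<circ> Q) x ! (i - 1) = x ! (i - 1)" using p q cl[OF x] x by simp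
      qed
      then show ?case by (rule disjI1)
    next
      assume q: "\<forall>x\<in>R. Q x ! (i - 1) = (\<not> x ! (i - 1))"
      have "\<forall>x\<in>R. (P \<circ> Q) x ! (i - 1) = (\<not> x ! (i - 1))"
      proof
        fix x assume x: "x \<in> R"
        show "(P \<circ> Q) x ! (i - 1) = (\<not> x ! (i - 1))" using p q cl[OF x] x by simp
      qed
      then show ?case by (rule disjI2)
    qed
  next
    assume p: "\<forall>x\<in>R. P x ! (i - 1) = (\<not> x ! (i - 1))"
    from comp(4) show ?case
    proof
      assume q: "\<forall>x\<in>R. Q x ! (i - 1) = x ! (i - 1)"
      have "\<forall>x\<in>R. (P \<circ> Q) x ! (i - 1) = (\<not> x ! (i - 1))"
      proof
        fix x assume x: "x \<in> R"
        show "(P \<circ> Q) x ! (i - 1) = (\<not> x ! (i - 1))" using p q cl[OF x] x by simp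
      qed
      then show ?case by (rule disjI2)
    next
      assume q: "\<forall>x\<in>R. Q x ! (i - 1) = (\<not> x ! (i - 1))"
      have "\<forall>x\<in>R. (P \<circ> Q) x ! (i - 1) = x ! (i - 1)"
      proof
        fix x assume x: "x \<in> R"
        show "(P \<circ> Q) x ! (i - 1) = x ! (i - 1)" using p q cl[OF x] x by simp
      qed
      then show ?case by (rule disjI1)
    qed
  qed
qed

lemma gen_uniform:
  assumes g: "generator_set n R T" and P: "P \<in> gen T" and A: "A \<subseteq> qset n"
    and psi: "psi \<in> R" "agree A (P psi) psi" and phi: "phi \<in> R"
  shows "agree A (P phi) phi"
  unfolding agree_def
proof
  fix i assume iA: "i \<in> A"
  then have "i \<in> qset n" using A by blast
  from gen_bits[OF g P this] show "P phi ! (i - 1) = phi ! (i - 1)"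
    using psi phi iA unfolding agree_def by auto
qed

lemma Ocal_alt:
  assumes "finite A"
  shows "Ocal R T A = (\<lambda>P. restrict P R) ` {P \<in> gen T. \<forall>x\<in>R. agree A (P x) x}"
  using assms unfolding Ocal_def by (auto simp: proj_eq_agree agree_def)

lemma simA_alt:
  assumes "finite A"
  shows "simA R A = {(x, y). x \<in> R \<and> y \<in> R \<and> agree A x y}"
  using assms unfolding simA_def by (auto simp: proj_eq_agree agree_def)

lemma finite_q: "A \<subseteq> qset n \<Longrightarrow> finite A"
  unfolding qset_def using finite_subset by blast

lemma agree_sym: "agree A x y = agree A y x"
  unfolding agree_def by auto

lemma Ocal_sub:
  assumes g: "generator_set n R T" and A: "A \<subseteq> qset n" and B: "B \<subseteq> qset n"
  shows "Ocal R T A \<subseteq> Ocal R T B \<longleftrightarrow> simA R A \<subseteq> simA R B"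
proof
  assume sub: "Ocal R T A \<subseteq> Ocal R T B"
  show "simA R A \<subseteq> simA R B"
  proof
    fix p assume "p \<in> simA R A"
    then obtain x y where p: "p = (x, y)" and xy: "x \<in> R" "y \<in> R" "agree A x y"
      using simA_alt[OF finite_q[OF A]] by auto
    obtain P where P: "P \<in> gen T" "P x = y"
      using gs3[OF g] xy by blast
    have "\<forall>z\<in>R. agree A (P z) z"
      using gen_uniform[OF g P(1) A xy(1)] P(2) xy(3) agree_sym by metis
    then have "restrict P R \<in> Ocal R T A"
      using Ocal_alt[OF finite_q[OF A]] P(1) by auto
    with sub obtain Q where Q: "Q \<in> gen T" "\<forall>z\<in>R. agree B (Q z) z" "restrict Q R = restrict P R"
      using Ocal_alt[OF finite_q[OF B]] by auto
    have "Q x = y" using Q(3) xy(1) P(2) by (metis restrict_apply')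
    then have "agree B x y" using Q(2) xy(1) agree_sym by metis
    then show "p \<in> simA R B" using p xy simA_alt[OF finite_q[OF B]] by auto
  qed
next
  assume sub: "simA R A \<subseteq> simA R B"
  show "Ocal R T A \<subseteq> Ocal R T B"
  proof
    fix Op assume "Op \<in> Ocal R T A"
    then obtain P where P: "P \<in> gen T" "\<forall>x\<in>R. agree A (P x) x" "Op = restrict P R"
      using Ocal_alt[OF finite_q[OF A]] by auto
    have "\<forall>x\<in>R. agree B (P x) x"
    proof
      fix x assume x: "x \<in> R"
      then have "(P x, x) \<in> simA R A" using P(2) gen_closed[OF g P(1) x]
        simA_alt[OF finite_q[OF A]] by auto
      then have "(P x, x) \<in> simA R B" using sub by blast
      then show "agree B (P x) x" using simA_alt[OF finite_q[OF B]] by auto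
    qed
    then show "Op \<in> Ocal R T B" using P Ocal_alt[OF finite_q[OF B]] by auto
  qed
qed

lemma equiv_simA: "equiv R (simA R A)"
  unfolding equiv_def refl_on_def sym_def trans_def simA_def by auto

lemma quotient_eq_rel:
  assumes r: "equiv X r" and s: "equiv X s" and q: "X // r = X // s"
  shows "r \<subseteq> s"
proof
  fix p assume p: "p \<in> r"
  then obtain x y where xy: "p = (x, y)" "(x, y) \<in> r" by (cases p) auto
  have x: "x \<in> X" using xy r by (meson equiv_class_eq_iff)
  have "r `` {x} \<in> X // s" using q x by (metis quotientI)
  then obtain z where z: "z \<in> X" "r `` {x} = s `` {z}" by (auto elim: quotientE)
  have "x \<in> r `` {x}" using r x by (meson equiv_class_self)
  then have "(z, x) \<in> s" using z by auto
  moreover have "y \<in> r `` {x}" using xy by auto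
  then have "(z, y) \<in> s" using z by auto
  ultimately have "(x, y) \<in> s" using s unfolding equiv_def sym_def trans_def by blast
  then show "p \<in> s" using xy by simp
qed

lemma key:
  assumes g: "generator_set n R T" and A: "A \<subseteq> qset n" and B: "B \<subseteq> qset n"
  shows "Ocal R T A = Ocal R T B \<longleftrightarrow> classes R A = classes R B"
proof -
  have "Ocal R T A = Ocal R T B \<longleftrightarrow> simA R A = simA R B"
    using Ocal_sub[OF g A B] Ocal_sub[OF g B A] by blast
  also have "\<dots> \<longleftrightarrow> classes R A = classes R B"
    unfolding classes_def
    using quotient_eq_rel[OF equiv_simA equiv_simA, of R A B]
      quotient_eq_rel[OF equiv_simA equiv_simA, of R B A] by auto
  finally show ?thesis .
qed

theorem theorem2:
  fixes n :: nat and R :: "bool list set" and T :: "(bool list \<Rightarrow> bool list) set"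
    and A1 A2 :: "nat set"
  assumes "R \<subseteq> basis n"
    and "generator_set n R T"
    and "A1 \<subseteq> qset n" and "A2 \<subseteq> qset n"
  shows "{Ocal R T A1, Ocal R T (compl_q n A1)} = {Ocal R T A2, Ocal R T (compl_q n A2)}
         \<longleftrightarrow> sim_R n R A1 A2"
proof -
  have c1: "compl_q n A1 \<subseteq> qset n" and c2: "compl_q n A2 \<subseteq> qset n"
    unfolding compl_q_def by auto
  note k = key[OF assms(2)]
  have e1: "Ocal R T A1 = Ocal R T A2 \<longleftrightarrow> classes R A1 = classes R A2" using k assms by blast
  have e2: "Ocal R T A1 = Ocal R T (compl_q n A2) \<longleftrightarrow> classes R A1 = classes R (compl_q n A2)"
    using k assms c2 by blast
  have e3: "Ocal R T (compl_q n A1) = Ocal R T A2 \<longleftrightarrow> classes R (compl_q n A1) = classes R A2"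
    using k assms c1 by blast
  have e4: "Ocal R T (compl_q n A1) = Ocal R T (compl_q n A2) \<longleftrightarrow> classes R (compl_q n A1) = classes R (compl_q n A2)"
    using k c1 c2 by blast
  have e5: "Ocal R T A1 = Ocal R T (compl_q n A1) \<longleftrightarrow> classes R A1 = classes R (compl_q n A1)"
    using k assms c1 by blast
  have e6: "Ocal R T A2 = Ocal R T (compl_q n A2) \<longleftrightarrow> classes R A2 = classes R (compl_q n A2)"
    using k assms c2 by blast
  show ?thesis unfolding sim_R_def doubleton_eq_iff using e1 e2 e3 e4 e5 e6 by metis
qed

end
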